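(* Let $(q_n),(r_n)$ be complex sequences vanishing faster than any negative power of $|n|$ as $n\to\pm\infty$ with $1-q_nr_n\neq0$ and $1+q_nr_{n+1}\ne0$ for all $n$, and let $D_n,E_n,D_\infty,E_\infty,u_n,v_n,p_n,s_n$ be as in the context. Then at $z=1$ the Jost solutions of system (Q) and of system (U) with potentials $(u,v)$ and $(p,s)$ are $$\begin{bmatrix}\bar\psi_n^{(q,r)}(1)&\psi_n^{(q,r)}(1)\end{bmatrix}=\begin{bmatrix}1&0\\ \sum_{j=n}^\infty r_j&1\end{bmatrix},$$ $$\begin{bmatrix}\bar\psi_n^{(u,v)}(1)&\psi_n^{(u,v)}(1)\end{bmatrix}=\begin{bmatrix}\frac{E_{n-1}}{E_\infty}&\frac{E_{n-1}}{D_\infty}\sum_{j=n}^\infty q_j\\ -r_n\frac{D_{n-1}}{E_\infty}&\frac{D_{n-1}}{D_\infty}\big(1-r_n\sum_{j=n}^\infty q_j\big)\end{bmatrix},$$ $$\begin{bmatrix}\bar\psi_n^{(p,s)}(1)&\psi_n^{(p,s)}(1)\end{bmatrix}=\begin{bmatrix}\frac{E_{n-1}}{E_\infty}\big(1+q_n\sum_{j=n+1}^\infty r_j\big)&q_n\frac{E_{n-1}}{D_\infty}\\ \frac{D_{n}}{E_\infty}\sum_{j=n+1}^\infty r_j&\frac{D_{n}}{D_\infty}\end{bmatrix}.$$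
   Context: System (Q): $\begin{bmatrix}\alpha_n\\ \beta_n\end{bmatrix}=\begin{bmatrix} z & (z-z^{-1})q_n\\ z r_n & z^{-1}+(z-z^{-1})q_nr_n\end{bmatrix}\begin{bmatrix}\alpha_{n+1}\\ \beta_{n+1}\end{bmatrix}$; system (U) with potentials $(a,b)$: $\begin{bmatrix}\xi_n\\ \eta_n\end{bmatrix}=\begin{bmatrix} z & z a_n\\ z^{-1}b_n & z^{-1}\end{bmatrix}\begin{bmatrix}\xi_{n+1}\\ \eta_{n+1}\end{bmatrix}$. $D_n=\prod_{j\le n}(1-q_jr_j)$, $E_n=\prod_{j\le n}(1+q_jr_{j+1})$, $D_\infty=\prod_{j\in\mathbb Z}(1-q_jr_j)$, $E_\infty=\prod_{j\in\mathbb Z}(1+q_jr_{j+1})$; $u_n=q_nE_{n-1}/D_n$, $v_n=(-r_n+r_{n+1}-q_nr_nr_{n+1})D_{n-1}/E_n$, $p_n=(q_n-q_{n+1}-q_nq_{n+1}r_{n+1})E_{n-1}/D_{n+1}$, $s_n=r_{n+1}D_n/E_n$. For $|z|=1$ the Jost solutions $\psi_n$ and $\bar\psi_n$ of each system (overbar not complex conjugation) are the unique solutions with $\psi_n=\begin{bmatrix}o(1)\\ z^n[1+o(1)]\end{bmatrix}$ and $\bar\psi_n=\begin{bmatrix}z^{-n}[1+o(1)]\\ o(1)\end{bmatrix}$ as $n\to+\infty$; $\begin{bmatrix}\bar\psi_n&\psi_n\end{bmatrix}$ is the $2\times2$ matrix with these columns. *)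

theory Defs
  imports "HOL-Analysis.Analysis"
begin

definition rapidly_decaying :: "(int \<Rightarrow> complex) \<Rightarrow> bool" where
  "rapidly_decaying q \<longleftrightarrow>
     (\<forall>k::nat. ((\<lambda>n. real_of_int \<bar>n\<bar> ^ k * cmod (q n)) \<longlongrightarrow> 0) at_top
            \<and> ((\<lambda>n. real_of_int \<bar>n\<bar> ^ k * cmod (q n)) \<longlongrightarrow> 0) at_bot)"

definition solQ :: "(int \<Rightarrow> complex) \<Rightarrow> (int \<Rightarrow> complex) \<Rightarrow> complex \<Rightarrow> (int \<Rightarrow> complex \<times> complex) \<Rightarrow> bool" where
  "solQ q r z \<psi> \<longleftrightarrow> (\<forall>n.
     fst (\<psi> n) = z * fst (\<psi> (n+1)) + (z - inverse z) * q n * snd (\<psi> (n+1)) \<and>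
     snd (\<psi> n) = z * r n * fst (\<psi> (n+1)) + (inverse z + (z - inverse z) * q n * r n) * snd (\<psi> (n+1)))"

definition solU :: "(int \<Rightarrow> complex) \<Rightarrow> (int \<Rightarrow> complex) \<Rightarrow> complex \<Rightarrow> (int \<Rightarrow> complex \<times> complex) \<Rightarrow> bool" where
  "solU a b z \<psi> \<longleftrightarrow> (\<forall>n.
     fst (\<psi> n) = z * fst (\<psi> (n+1)) + z * a n * snd (\<psi> (n+1)) \<and>
     snd (\<psi> n) = inverse z * b n * fst (\<psi> (n+1)) + inverse z * snd (\<psi> (n+1)))"

definition jost_asym :: "complex \<Rightarrow> (int \<Rightarrow> complex \<times> complex) \<Rightarrow> bool" where
  "jost_asym z \<psi> \<longleftrightarrow> ((\<lambda>n. fst (\<psi> n)) \<longlongrightarrow> 0) at_top \<and>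
                        ((\<lambda>n. snd (\<psi> n) / z powi n) \<longlongrightarrow> 1) at_top"

definition jostbar_asym :: "complex \<Rightarrow> (int \<Rightarrow> complex \<times> complex) \<Rightarrow> bool" where
  "jostbar_asym z \<psi> \<longleftrightarrow> ((\<lambda>n. fst (\<psi> n) / z powi (-n)) \<longlongrightarrow> 1) at_top \<and>
                           ((\<lambda>n. snd (\<psi> n)) \<longlongrightarrow> 0) at_top"

definition jostQ where "jostQ q r z = (THE \<psi>. solQ q r z \<psi> \<and> jost_asym z \<psi>)"
definition jostbarQ where "jostbarQ q r z = (THE \<psi>. solQ q r z \<psi> \<and> jostbar_asym z \<psi>)"
definition jostU where "jostU a b z = (THE \<psi>. solU a b z \<psi> \<and> jost_asym z \<psi>)"
definition jostbarU where "jostbarU a b z = (THE \<psi>. solU a b z \<psi> \<and> jostbar_asym z \<psi>)"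

text \<open>D_n = prod_{j<=n} (1 - q_j r_j), E_n = prod_{j<=n} (1 + q_j r_{j+1}) (infinite products).\<close>
definition Dn :: "(int \<Rightarrow> complex) \<Rightarrow> (int \<Rightarrow> complex) \<Rightarrow> int \<Rightarrow> complex" where
  "Dn q r n = (\<Prod>k. 1 - q (n - int k) * r (n - int k))"
definition En :: "(int \<Rightarrow> complex) \<Rightarrow> (int \<Rightarrow> complex) \<Rightarrow> int \<Rightarrow> complex" where
  "En q r n = (\<Prod>k. 1 + q (n - int k) * r (n - int k + 1))"

text \<open>D_infty, E_infty: products over all of Z (limits of symmetric partial products).\<close>
definition Dinf :: "(int \<Rightarrow> complex) \<Rightarrow> (int \<Rightarrow> complex) \<Rightarrow> complex" where
  "Dinf q r = lim (\<lambda>N::nat. \<Prod>j\<in>{- int N..int N}. 1 - q j * r j)"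
definition Einf :: "(int \<Rightarrow> complex) \<Rightarrow> (int \<Rightarrow> complex) \<Rightarrow> complex" where
  "Einf q r = lim (\<lambda>N::nat. \<Prod>j\<in>{- int N..int N}. 1 + q j * r (j + 1))"

definition tailsum :: "(int \<Rightarrow> complex) \<Rightarrow> int \<Rightarrow> complex" where
  "tailsum f n = (\<Sum>k. f (n + int k))"

definition uu where "uu q r n = q n * En q r (n-1) / Dn q r n"
definition vv where "vv q r n = (- r n + r (n+1) - q n * r n * r (n+1)) * Dn q r (n-1) / En q r n"
definition pp where "pp q r n = (q n - q (n+1) - q n * q (n+1) * r (n+1)) * En q r (n-1) / Dn q r (n+1)"
definition ss where "ss q r n = r (n+1) * Dn q r n / En q r n"

end

theory Submission
  imports Defs
begin


definition NS :: "(int \<Rightarrow> complex) \<Rightarrow> bool" where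
  "NS f \<longleftrightarrow> summable (\<lambda>k::nat. norm (f (int k)))"

lemma NS_shift: assumes "NS f" shows "summable (\<lambda>k. norm (f (n + int k)))"
proof (cases "n \<ge> 0")
  case True
  have "summable (\<lambda>k. norm (f (int (k + nat n))))"
    using assms unfolding NS_def by (subst summable_iff_shift[where f="\<lambda>k. norm (f (int k))"])
  moreover have "(\<lambda>k. norm (f (int (k + nat n)))) = (\<lambda>k. norm (f (n + int k)))" using True by (auto simp: algebra_simps)
  ultimately show ?thesis by simp
next
  case False
  let ?g = "\<lambda>k. norm (f (n + int k))"
  have "(\<lambda>k. ?g (k + nat (-n))) = (\<lambda>k. norm (f (int k)))" using False by auto
  hence "summable (\<lambda>k. ?g (k + nat (-n)))" using assms unfolding NS_def by simp
  thus ?thesis using summable_iff_shift[of ?g "nat (-n)"] by blast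
qed

lemma NS_shift_summable: "NS f \<Longrightarrow> summable (\<lambda>k. f (n + int k))"
  by (rule summable_norm_cancel, erule NS_shift)

lemma NS_add: "NS f \<Longrightarrow> NS g \<Longrightarrow> NS (\<lambda>j. f j + g j)"
  unfolding NS_def
proof -
  assume a: "summable (\<lambda>k. norm (f (int k)))" "summable (\<lambda>k. norm (g (int k)))"
  show "summable (\<lambda>k. norm (f (int k) + g (int k)))"
    by (rule summable_comparison_test'[where N=0, OF summable_add[OF a]]) (simp add: norm_triangle_ineq)
qed

lemma NS_uminus: "NS f \<Longrightarrow> NS (\<lambda>j. - f j)"
  unfolding NS_def by simp

lemma NS_diff: "NS f \<Longrightarrow> NS g \<Longrightarrow> NS (\<lambda>j. f j - g j)"
  using NS_add[of f "\<lambda>j. - g j"] NS_uminus[of g] by simp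

lemma NS_shift1: "NS f \<Longrightarrow> NS (\<lambda>j. f (j + 1))"
proof -
  assume "NS f"
  from NS_shift[OF this, of 1] show ?thesis unfolding NS_def by (simp only: add.commute)
qed

lemma NS_zero: "NS (\<lambda>_. 0)" unfolding NS_def by simp

lemma NS_cong: "NS f \<Longrightarrow> (\<And>j. f j = g j) \<Longrightarrow> NS g"
proof -
  assume "NS f" "\<And>j. f j = g j"
  then show ?thesis by (simp add: NS_def)
qed

lemma ev_top_seq: assumes "eventually P (at_top :: int filter)"
  shows "eventually (\<lambda>k. P (n + int k)) sequentially"
proof -
  obtain N where N: "\<And>m. m \<ge> N \<Longrightarrow> P m" using assms by (auto simp: eventually_at_top_linorder)
  show ?thesis by (rule eventually_sequentiallyI[of "nat (N - n)"]) (auto intro: N)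
qed

lemma filterlim_shift_seq: "filterlim (\<lambda>k. n + int k) (at_top :: int filter) sequentially"
  unfolding filterlim_at_top by (auto intro: ev_top_seq)

lemma tendsto_seq: "(g \<longlongrightarrow> L) (at_top :: int filter) \<Longrightarrow> ((\<lambda>k. g (n + int k)) \<longlongrightarrow> L) sequentially"
  by (rule filterlim_compose[OF _ filterlim_shift_seq])

lemma filterlim_int_shift: "filterlim (\<lambda>n::int. n + c) at_top at_top"
  unfolding filterlim_at_top eventually_at_top_linorder
proof
  fix Z :: int show "\<exists>N. \<forall>n\<ge>N. Z \<le> n + c" by (rule exI[of _ "Z - c"]) auto
qed

lemma tendsto_int_shift: "(g \<longlongrightarrow> L) (at_top :: int filter) \<Longrightarrow> ((\<lambda>n. g (n + c)) \<longlongrightarrow> L) at_top"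
  by (rule filterlim_compose[OF _ filterlim_int_shift])

lemma tendsto_int_shiftm: "(g \<longlongrightarrow> L) (at_top :: int filter) \<Longrightarrow> ((\<lambda>n. g (n - c)) \<longlongrightarrow> L) at_top"
  using tendsto_int_shift[of g L "-c"] by simp

lemma NS_mult_conv:
  assumes "NS f" "(g \<longlongrightarrow> L) at_top"
  shows "NS (\<lambda>j. f j * g j)"
proof -
  have "eventually (\<lambda>j. norm (g j) \<le> norm L + 1) at_top"
  proof -
    have "eventually (\<lambda>j. dist (g j) L < 1) at_top" using assms(2) tendstoD by force
    thus ?thesis
      by eventually_elim (metis add.commute dist_norm norm_triangle_ineq2 less_imp_le
            add_le_cancel_left diff_le_eq order_trans norm_minus_commute)
  qed
  hence ev: "eventually (\<lambda>k. norm (g (0 + int k)) \<le> norm L + 1) sequentially" by (rule ev_top_seq)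
  show ?thesis unfolding NS_def
  proof (rule summable_comparison_test_ev[where g="\<lambda>k. (norm L + 1) * norm (f (int k))"])
    show "summable (\<lambda>k. (norm L + 1) * norm (f (int k)))" using assms(1) unfolding NS_def
      by (rule summable_mult)
    show "\<forall>\<^sub>F k in sequentially. norm (norm (f (int k) * g (int k))) \<le> (norm L + 1) * norm (f (int k))"
      using ev by eventually_elim (simp add: norm_mult, metis mult.commute mult_left_mono norm_ge_zero)
  qed
qed



lemma filterlim_int_uminus: "filterlim (\<lambda>n::int. -n) at_bot at_top"
  unfolding filterlim_at_bot eventually_at_top_linorder
proof
  fix Z :: int show "\<exists>N. \<forall>n\<ge>N. - n \<le> Z" by (rule exI[of _ "- Z"]) auto
qed

lemma filterlim_int_uminus': "filterlim (\<lambda>n::int. -n) at_top at_bot"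
  unfolding filterlim_at_top eventually_at_bot_linorder
proof
  fix Z :: int show "\<exists>N. \<forall>n\<le>N. Z \<le> - n" by (rule exI[of _ "- Z"]) auto
qed

lemma rd_mirror: assumes "rapidly_decaying q" shows "rapidly_decaying (\<lambda>j. q (- j))"
  unfolding rapidly_decaying_def
proof
  fix k :: nat
  have a: "((\<lambda>n. real_of_int \<bar>n\<bar> ^ k * cmod (q n)) \<longlongrightarrow> 0) at_top"
      "((\<lambda>n. real_of_int \<bar>n\<bar> ^ k * cmod (q n)) \<longlongrightarrow> 0) at_bot"
    using assms unfolding rapidly_decaying_def by blast+
  have "((\<lambda>n. real_of_int \<bar>- n\<bar> ^ k * cmod (q (- n))) \<longlongrightarrow> 0) at_top"
    by (rule filterlim_compose[OF a(2) filterlim_int_uminus])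
  moreover have "((\<lambda>n. real_of_int \<bar>- n\<bar> ^ k * cmod (q (- n))) \<longlongrightarrow> 0) at_bot"
    by (rule filterlim_compose[OF a(1) filterlim_int_uminus'])
  ultimately show "((\<lambda>n. real_of_int \<bar>n\<bar> ^ k * cmod (q (- n))) \<longlongrightarrow> 0) at_top \<and>
      ((\<lambda>n. real_of_int \<bar>n\<bar> ^ k * cmod (q (- n))) \<longlongrightarrow> 0) at_bot" by simp
qed

lemma rd_NS: assumes "rapidly_decaying q" shows "NS q"
proof -
  have "((\<lambda>n. real_of_int \<bar>n\<bar> ^ 2 * cmod (q n)) \<longlongrightarrow> 0) at_top"
    using assms unfolding rapidly_decaying_def by blast
  hence "eventually (\<lambda>n. real_of_int \<bar>n\<bar> ^ 2 * cmod (q n) < 1) at_top"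
    by (rule order_tendstoD) simp
  hence ev: "eventually (\<lambda>k. real_of_int \<bar>0 + int k\<bar> ^ 2 * cmod (q (0 + int k)) < 1) sequentially"
    by (rule ev_top_seq)
  have ev2: "eventually (\<lambda>k. norm (norm (q (int k))) \<le> inverse (real k ^ 2)) sequentially"
    using ev eventually_gt_at_top[of "0::nat"]
  proof eventually_elim
    case (elim k)
    hence "real k ^ 2 * cmod (q (int k)) \<le> 1" by simp
    moreover have "real k ^ 2 > 0" using elim by simp
    ultimately show ?case by (simp add: field_simps)
  qed
  show ?thesis unfolding NS_def
    by (rule summable_comparison_test_ev[OF ev2 inverse_power_summable]) simp
qed

lemma rd_NS': "rapidly_decaying q \<Longrightarrow> NS (\<lambda>j. q (- j))"
  by (rule rd_NS, rule rd_mirror)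

lemma rd_tendsto: assumes "rapidly_decaying q" shows "(q \<longlongrightarrow> 0) at_top"
proof -
  have "((\<lambda>n. real_of_int \<bar>n\<bar> ^ 0 * cmod (q n)) \<longlongrightarrow> 0) at_top"
    using assms unfolding rapidly_decaying_def by blast
  hence "((\<lambda>n. cmod (q n)) \<longlongrightarrow> 0) at_top" by simp
  thus ?thesis by (simp add: tendsto_norm_zero_iff)
qed

lemma rd_tendsto': "rapidly_decaying q \<Longrightarrow> ((\<lambda>j. q (- j)) \<longlongrightarrow> 0) at_top"
  by (rule rd_tendsto, rule rd_mirror)

lemma tailsum_rec: assumes "NS f" shows "tailsum f n = f n + tailsum f (n+1)"
proof -
  have s: "summable (\<lambda>k. f (n + int k))" using assms by (rule NS_shift_summable)
  have "(\<Sum>k. f (n + int (Suc k))) = tailsum f n - f (n + int 0)"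
    using suminf_split_head[OF s] unfolding tailsum_def .
  moreover have "(\<lambda>k. f (n + int (Suc k))) = (\<lambda>k. f (n + 1 + int k))"
    by (simp add: algebra_simps)
  ultimately show ?thesis unfolding tailsum_def by simp
qed

lemma tailsum_lim: assumes "NS f" shows "(tailsum f \<longlongrightarrow> 0) at_top"
proof -
  let ?g = "\<lambda>k. f (int k)"
  have s: "summable ?g" using NS_shift_summable[OF assms, of 0] by simp
  have eq: "tailsum f (int m) = suminf ?g - (\<Sum>i<m. ?g i)" for m
  proof -
    have "(\<lambda>k. f (int m + int k)) = (\<lambda>k. ?g (k + m))" by (simp add: add.commute)
    thus ?thesis unfolding tailsum_def using suminf_minus_initial_segment[OF s, of m] by simp
  qed
  have "(\<lambda>m. suminf ?g - (\<Sum>i<m. ?g i)) \<longlonglongrightarrow> suminf ?g - suminf ?g"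
    by (intro tendsto_diff tendsto_const summable_LIMSEQ s)
  hence "(\<lambda>m. tailsum f (int m)) \<longlonglongrightarrow> 0" unfolding eq by simp
  hence "((\<lambda>n. tailsum f (int (nat n))) \<longlongrightarrow> 0) at_top"
    by (rule filterlim_compose[OF _ filterlim_nat_sequentially])
  moreover have "eventually (\<lambda>n. tailsum f (int (nat n)) = tailsum f n) at_top"
    using eventually_ge_at_top[of "0::int"] by eventually_elim simp
  ultimately show ?thesis by (rule Lim_transform_eventually)
qed



definition PP :: "(int \<Rightarrow> complex) \<Rightarrow> int \<Rightarrow> complex" where
  "PP c n = (\<Prod>k. c (n - int k))"

definition PA :: "(int \<Rightarrow> complex) \<Rightarrow> bool" where
  "PA c \<longleftrightarrow> (\<forall>j. c j \<noteq> 0) \<and> NS (\<lambda>j. c j - 1) \<and> NS (\<lambda>j. c (- j) - 1)"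

lemma PP_conv: assumes "PA c" shows "convergent_prod (\<lambda>k. c (n - int k))"
proof -
  have "NS (\<lambda>j. c (- j) - 1)" using assms unfolding PA_def by blast
  from NS_shift[OF this, of "-n"]
  have "summable (\<lambda>k. norm (c (n - int k) - 1))" by simp
  thus ?thesis
    by (intro abs_convergent_prod_imp_convergent_prod summable_imp_abs_convergent_prod)
qed

lemma PP_nz: assumes "PA c" shows "PP c n \<noteq> 0"
  unfolding PP_def using assms by (intro prodinf_nonzero PP_conv) (auto simp: PA_def)

lemma PP_rec: assumes "PA c" shows "PP c (n+1) = c (n+1) * PP c n"
proof -
  have nz: "c (n + 1 - int 0) \<noteq> 0" using assms by (auto simp: PA_def)
  have "(\<Prod>k. c (n + 1 - int (Suc k))) = PP c (n+1) / c (n + 1 - int 0)"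
    using prodinf_split_head[OF PP_conv[OF assms, of "n+1"]] nz unfolding PP_def by simp
  moreover have "(\<lambda>k. c (n + 1 - int (Suc k))) = (\<lambda>k. c (n - int k))" by simp
  ultimately have "PP c n = PP c (n+1) / c (n+1)" unfolding PP_def by simp
  thus ?thesis using nz by (simp add: field_simps)
qed

lemma PP_rec': assumes "PA c" shows "PP c n = c n * PP c (n - 1)"
  using PP_rec[OF assms, of "n - 1"] by simp

lemma PP_split: assumes "PA c" shows "PP c (n + int m) = (\<Prod>i<m. c (n + 1 + int i)) * PP c n"
proof (induction m)
  case 0 thus ?case by simp
next
  case (Suc m)
  have "PP c (n + int (Suc m)) = PP c ((n + int m) + 1)" by (simp add: algebra_simps)
  also have "\<dots> = c (n + int m + 1) * PP c (n + int m)" by (rule PP_rec[OF assms])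
  also have "\<dots> = (\<Prod>i<Suc m. c (n + 1 + int i)) * PP c n"
    using Suc.IH by (simp add: algebra_simps)
  finally show ?case .
qed

lemma prod_int_interval: "(\<Prod>j\<in>{a..<a + int m}. c j) = (\<Prod>i<m. c (a + int i))"
proof (induction m)
  case 0 thus ?case by simp
next
  case (Suc m)
  have "{a..<a + int (Suc m)} = insert (a + int m) {a..<a + int m}" by auto
  hence "(\<Prod>j\<in>{a..<a + int (Suc m)}. c j) = c (a + int m) * (\<Prod>j\<in>{a..<a + int m}. c j)"
    by simp
  thus ?case using Suc.IH by (simp add: mult.commute)
qed

lemma prod_sym: "(\<Prod>j\<in>{- int N..int N}. c j) = (\<Prod>i<2*N+1. c (- int N + int i))"
proof -
  have "{- int N..int N} = {- int N..< - int N + int (2*N+1)}" by auto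
  thus ?thesis using prod_int_interval[of c "- int N" "2*N+1"] by simp
qed

lemma LIMSEQ_prod_lessThan:
  fixes f :: "nat \<Rightarrow> complex"
  assumes "convergent_prod f" shows "(\<lambda>m. \<Prod>i<m. f i) \<longlonglongrightarrow> prodinf f"
proof -
  have "(\<lambda>n. \<Prod>i\<le>n. f i) \<longlonglongrightarrow> prodinf f" by (rule convergent_prod_LIMSEQ[OF assms])
  hence "(\<lambda>n. \<Prod>i<Suc n. f i) \<longlonglongrightarrow> prodinf f" by (simp add: lessThan_Suc_atMost)
  thus ?thesis by (rule LIMSEQ_imp_Suc)
qed

lemma PP_lim:
  assumes "PA c"
  shows "\<exists>L. L \<noteq> 0 \<and> (PP c \<longlongrightarrow> L) at_top \<and> (\<lambda>N::nat. \<Prod>j\<in>{- int N..int N}. c j) \<longlonglongrightarrow> L"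
proof -
  have cz: "\<And>j. c j \<noteq> 0" using assms by (auto simp: PA_def)
  have "NS (\<lambda>j. c j - 1)" using assms unfolding PA_def by blast
  from NS_shift[OF this, of 1]
  have "summable (\<lambda>k. norm (c (1 + int k) - 1))" by simp
  hence cQ: "convergent_prod (\<lambda>k. c (1 + int k))"
    by (intro abs_convergent_prod_imp_convergent_prod summable_imp_abs_convergent_prod)
  define Q where "Q = (\<Prod>k. c (1 + int k))"
  have Qnz: "Q \<noteq> 0" unfolding Q_def using cQ cz by (intro prodinf_nonzero) auto
  define L where "L = Q * PP c 0"
  have Lnz: "L \<noteq> 0" unfolding L_def using Qnz PP_nz[OF assms] by simp
  have seq: "(\<lambda>m. PP c (int m)) \<longlonglongrightarrow> L"
  proof -
    have "(\<lambda>m. (\<Prod>i<m. c (1 + int i)) * PP c 0) \<longlonglongrightarrow> L"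
      unfolding L_def Q_def by (intro tendsto_mult tendsto_const LIMSEQ_prod_lessThan cQ)
    moreover have "PP c (int m) = (\<Prod>i<m. c (1 + int i)) * PP c 0" for m
      using PP_split[OF assms, of 0 m] by simp
    ultimately show ?thesis by simp
  qed
  have top: "(PP c \<longlongrightarrow> L) at_top"
  proof -
    have "((\<lambda>n. PP c (int (nat n))) \<longlongrightarrow> L) at_top"
      by (rule filterlim_compose[OF seq filterlim_nat_sequentially])
    moreover have "eventually (\<lambda>n. PP c (int (nat n)) = PP c n) at_top"
      using eventually_ge_at_top[of "0::int"] by eventually_elim simp
    ultimately show ?thesis by (rule Lim_transform_eventually)
  qed
  have tail: "(\<lambda>N. PP c (- int N - 1)) \<longlonglongrightarrow> 1"
  proof -
    have c0: "convergent_prod (\<lambda>k. c (0 - int k))" by (rule PP_conv[OF assms])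
    define A where "A N = (\<Prod>i<Suc N. c (0 - int i))" for N
    have Anz: "A N \<noteq> 0" for N unfolding A_def using cz by simp
    have "PP c 0 = (\<Prod>i. c (0 - int (i + Suc N))) * A N" for N
      unfolding PP_def A_def using prodinf_split_initial_segment[OF c0, of "Suc N"] cz by simp
    moreover have "(\<lambda>i. c (0 - int (i + Suc N))) = (\<lambda>i. c (- int N - 1 - int i))" for N
      by (intro ext arg_cong[where f=c]) simp
    ultimately have eq: "PP c (- int N - 1) = PP c 0 / A N" for N
      using Anz unfolding PP_def by (simp add: field_simps)
    have "A \<longlonglongrightarrow> PP c 0"
    proof -
      have "(\<lambda>m. \<Prod>i<m. c (0 - int i)) \<longlonglongrightarrow> PP c 0"
        unfolding PP_def by (rule LIMSEQ_prod_lessThan[OF c0])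
      thus ?thesis unfolding A_def by (rule LIMSEQ_Suc)
    qed
    hence "(\<lambda>N. PP c 0 / A N) \<longlonglongrightarrow> PP c 0 / PP c 0"
      using PP_nz[OF assms] by (intro tendsto_divide tendsto_const) auto
    thus ?thesis unfolding eq using PP_nz[OF assms] by simp
  qed
  have sym: "(\<lambda>N::nat. \<Prod>j\<in>{- int N..int N}. c j) \<longlonglongrightarrow> L"
  proof -
    have "PP c (int N) = (\<Prod>j\<in>{- int N..int N}. c j) * PP c (- int N - 1)" for N
      using PP_split[OF assms, of "- int N - 1" "2*N+1"] unfolding prod_sym by (simp add: algebra_simps)
    hence eq: "(\<Prod>j\<in>{- int N..int N}. c j) = PP c (int N) / PP c (- int N - 1)" for N
      using PP_nz[OF assms] by (simp add: field_simps)
    have "(\<lambda>N. PP c (int N) / PP c (- int N - 1)) \<longlonglongrightarrow> L / 1"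
      by (intro tendsto_divide seq tail) simp
    thus ?thesis unfolding eq by simp
  qed
  show ?thesis using Lnz top sym by blast
qed



lemma solU1: "solU a b 1 \<psi> \<longleftrightarrow> (\<forall>n. fst (\<psi> n) = fst (\<psi> (n+1)) + a n * snd (\<psi> (n+1)) \<and>
    snd (\<psi> n) = b n * fst (\<psi> (n+1)) + snd (\<psi> (n+1)))"
  unfolding solU_def by simp

lemma U_unique:
  assumes "NS a" "NS b" "solU a b 1 \<phi>" "solU a b 1 \<psi>"
    and l1: "((\<lambda>n. fst (\<phi> n) - fst (\<psi> n)) \<longlongrightarrow> 0) at_top"
    and l2: "((\<lambda>n. snd (\<phi> n) - snd (\<psi> n)) \<longlongrightarrow> 0) at_top"
  shows "\<phi> = \<psi>"
proof -
  define d1 where "d1 m = fst (\<phi> m) - fst (\<psi> m)" for m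
  define d2 where "d2 m = snd (\<phi> m) - snd (\<psi> m)" for m
  define x where "x m = norm (d1 m) + norm (d2 m)" for m
  define c where "c m = norm (a m) + norm (b m)" for m
  have c0: "c m \<ge> 0" for m unfolding c_def by simp
  have e1: "fst (\<phi> m) = fst (\<phi> (m+1)) + a m * snd (\<phi> (m+1))"
     "snd (\<phi> m) = b m * fst (\<phi> (m+1)) + snd (\<phi> (m+1))" for m
    using assms(3) unfolding solU1 by blast+
  have e2: "fst (\<psi> m) = fst (\<psi> (m+1)) + a m * snd (\<psi> (m+1))"
     "snd (\<psi> m) = b m * fst (\<psi> (m+1)) + snd (\<psi> (m+1))" for m
    using assms(4) unfolding solU1 by blast+
  have rec1: "d1 m = d1 (m+1) + a m * d2 (m+1)" for m
    unfolding d1_def d2_def e1(1)[of m] e2(1)[of m] by (simp add: algebra_simps)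
  have rec2: "d2 m = b m * d1 (m+1) + d2 (m+1)" for m
    unfolding d1_def d2_def e1(2)[of m] e2(2)[of m] by (simp add: algebra_simps)
  have step: "x m \<le> (1 + c m) * x (m+1)" for m
  proof -
    have "norm (d1 m) \<le> norm (d1 (m+1)) + norm (a m) * norm (d2 (m+1))"
      unfolding rec1[of m] by (metis norm_mult norm_triangle_ineq)
    moreover have "norm (d2 m) \<le> norm (b m) * norm (d1 (m+1)) + norm (d2 (m+1))"
      unfolding rec2[of m] by (metis norm_mult norm_triangle_ineq)
    moreover have "norm (a m) * norm (d2 (m+1)) \<le> norm (a m) * x (m+1)"
      unfolding x_def by (intro mult_left_mono) auto
    moreover have "norm (b m) * norm (d1 (m+1)) \<le> norm (b m) * x (m+1)"
      unfolding x_def by (intro mult_left_mono) auto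
    moreover have "(1 + c m) * x (m+1) = x (m+1) + norm (a m) * x (m+1) + norm (b m) * x (m+1)"
      by (simp add: c_def algebra_simps)
    moreover have "x m = norm (d1 m) + norm (d2 m)" "x (m+1) = norm (d1 (m+1)) + norm (d2 (m+1))"
      unfolding x_def by simp_all
    ultimately show ?thesis by linarith
  qed
  have iter: "x m \<le> exp (\<Sum>i<k. c (m + int i)) * x (m + int k)" for k m
  proof (induction k arbitrary: m)
    case 0 thus ?case by simp
  next
    case (Suc k)
    have "x m \<le> (1 + c m) * x (m+1)" by (rule step)
    also have "\<dots> \<le> exp (c m) * x (m+1)"
      by (intro mult_right_mono) (auto simp: x_def exp_ge_add_one_self add.commute)
    also have "\<dots> \<le> exp (c m) * (exp (\<Sum>i<k. c (m + 1 + int i)) * x (m + 1 + int k))"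
      by (intro mult_left_mono Suc.IH) simp
    also have "\<dots> = exp (\<Sum>i<Suc k. c (m + int i)) * x (m + int (Suc k))"
    proof -
      have "(\<Sum>i<Suc k. c (m + int i)) = c m + (\<Sum>i<k. c (m + 1 + int i))"
        by (subst sum.lessThan_Suc_shift) (simp add: algebra_simps)
      moreover have "m + int (Suc k) = m + 1 + int k" by simp
      ultimately show ?thesis by (simp only: exp_add mult.assoc)
    qed
    finally show ?case .
  qed
  have "x m = 0" for m
  proof -
    have sc: "summable (\<lambda>i. c (m + int i))" unfolding c_def
      using NS_shift[OF assms(1), of m] NS_shift[OF assms(2), of m] by (intro summable_add)
    define S where "S = (\<Sum>i. c (m + int i))"
    have b: "x m \<le> exp S * x (m + int k)" for k
    proof -
      have "(\<Sum>i<k. c (m + int i)) \<le> S" unfolding S_def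
        by (rule sum_le_suminf[OF sc]) (auto simp: c0)
      hence "exp (\<Sum>i<k. c (m + int i)) * x (m + int k) \<le> exp S * x (m + int k)"
        by (intro mult_right_mono) (auto simp: x_def)
      thus ?thesis using iter[of m k] by linarith
    qed
    have "(x \<longlongrightarrow> 0) at_top"
    proof -
      have "((\<lambda>n. norm (d1 n) + norm (d2 n)) \<longlongrightarrow> norm (0::complex) + norm (0::complex)) at_top"
        using l1 l2 unfolding d1_def d2_def by (intro tendsto_intros)
      thus ?thesis unfolding x_def by simp
    qed
    hence "(\<lambda>k. exp S * x (m + int k)) \<longlonglongrightarrow> exp S * 0"
      by (intro tendsto_mult tendsto_const tendsto_seq)
    hence "x m \<le> exp S * 0"
      by (rule tendsto_lowerbound) (auto simp: b)
    moreover have "x m \<ge> 0" unfolding x_def by simp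
    ultimately show ?thesis by simp
  qed
  hence "d1 m = 0 \<and> d2 m = 0" for m unfolding x_def
    by (metis add_nonneg_eq_0_iff norm_eq_zero norm_ge_zero)
  thus ?thesis unfolding d1_def d2_def by (auto simp: fun_eq_iff prod_eq_iff)
qed

lemma jostU_eq:
  assumes "NS a" "NS b" "solU a b 1 \<psi>" "((\<lambda>n. fst (\<psi> n)) \<longlongrightarrow> 0) at_top"
    "((\<lambda>n. snd (\<psi> n)) \<longlongrightarrow> 1) at_top"
  shows "jostU a b 1 = \<psi>"
  unfolding jostU_def
proof (rule the_equality)
  have "jost_asym 1 \<psi>" using assms(4,5) by (simp add: jost_asym_def)
  thus "solU a b 1 \<psi> \<and> jost_asym 1 \<psi>" using assms(3) by blast
next
  fix \<phi> assume h: "solU a b 1 \<phi> \<and> jost_asym 1 \<phi>"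
  hence t: "((\<lambda>n. fst (\<phi> n)) \<longlongrightarrow> 0) at_top" "((\<lambda>n. snd (\<phi> n)) \<longlongrightarrow> 1) at_top"
    unfolding jost_asym_def by auto
  show "\<phi> = \<psi>"
  proof (rule U_unique[OF assms(1,2)])
    show "solU a b 1 \<phi>" "solU a b 1 \<psi>" using h assms(3) by blast+
    show "((\<lambda>n. fst (\<phi> n) - fst (\<psi> n)) \<longlongrightarrow> 0) at_top"
      using tendsto_diff[OF t(1) assms(4)] by simp
    show "((\<lambda>n. snd (\<phi> n) - snd (\<psi> n)) \<longlongrightarrow> 0) at_top"
      using tendsto_diff[OF t(2) assms(5)] by simp
  qed
qed

lemma jostbarU_eq:
  assumes "NS a" "NS b" "solU a b 1 \<psi>" "((\<lambda>n. fst (\<psi> n)) \<longlongrightarrow> 1) at_top"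
    "((\<lambda>n. snd (\<psi> n)) \<longlongrightarrow> 0) at_top"
  shows "jostbarU a b 1 = \<psi>"
  unfolding jostbarU_def
proof (rule the_equality)
  have "jostbar_asym 1 \<psi>" using assms(4,5) by (simp add: jostbar_asym_def)
  thus "solU a b 1 \<psi> \<and> jostbar_asym 1 \<psi>" using assms(3) by blast
next
  fix \<phi> assume h: "solU a b 1 \<phi> \<and> jostbar_asym 1 \<phi>"
  hence t: "((\<lambda>n. fst (\<phi> n)) \<longlongrightarrow> 1) at_top" "((\<lambda>n. snd (\<phi> n)) \<longlongrightarrow> 0) at_top"
    unfolding jostbar_asym_def by auto
  show "\<phi> = \<psi>"
  proof (rule U_unique[OF assms(1,2)])
    show "solU a b 1 \<phi>" "solU a b 1 \<psi>" using h assms(3) by blast+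
    show "((\<lambda>n. fst (\<phi> n) - fst (\<psi> n)) \<longlongrightarrow> 0) at_top"
      using tendsto_diff[OF t(1) assms(4)] by simp
    show "((\<lambda>n. snd (\<phi> n) - snd (\<psi> n)) \<longlongrightarrow> 0) at_top"
      using tendsto_diff[OF t(2) assms(5)] by simp
  qed
qed

lemma jostQ_U: "jostQ q r 1 = jostU (\<lambda>_. 0) r 1"
  by (simp add: jostQ_def jostU_def solQ_def solU_def)

lemma jostbarQ_U: "jostbarQ q r 1 = jostbarU (\<lambda>_. 0) r 1"
  by (simp add: jostbarQ_def jostbarU_def solQ_def solU_def)



theorem theorem3p7:
  fixes q r :: "int \<Rightarrow> complex" and n :: int
  assumes "rapidly_decaying q" and "rapidly_decaying r"
    and "\<And>j. 1 - q j * r j \<noteq> 0" and "\<And>j. 1 + q j * r (j+1) \<noteq> 0"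
  shows "jostbarQ q r 1 n = (1, tailsum r n) \<and> jostQ q r 1 n = (0, 1)
    \<and> jostbarU (uu q r) (vv q r) 1 n
        = (En q r (n-1) / Einf q r, - r n * Dn q r (n-1) / Einf q r)
    \<and> jostU (uu q r) (vv q r) 1 n
        = (En q r (n-1) / Dinf q r * tailsum q n, Dn q r (n-1) / Dinf q r * (1 - r n * tailsum q n))
    \<and> jostbarU (pp q r) (ss q r) 1 n
        = (En q r (n-1) / Einf q r * (1 + q n * tailsum r (n+1)), Dn q r n / Einf q r * tailsum r (n+1))
    \<and> jostU (pp q r) (ss q r) 1 n
        = (q n * En q r (n-1) / Dinf q r, Dn q r n / Dinf q r)"
proof -
  have NSq: "NS q" and NSr: "NS r" and NSq': "NS (\<lambda>j. q (- j))" and NSr': "NS (\<lambda>j. r (- j))"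
    using assms(1,2) by (auto intro: rd_NS rd_NS')
  have q0: "(q \<longlongrightarrow> 0) at_top" and r0: "(r \<longlongrightarrow> 0) at_top"
    and q0': "((\<lambda>j. q (- j)) \<longlongrightarrow> 0) at_top" and r0': "((\<lambda>j. r (- j)) \<longlongrightarrow> 0) at_top"
    using assms(1,2) by (auto intro: rd_tendsto rd_tendsto')
  have r1: "((\<lambda>j. r (j + 1)) \<longlongrightarrow> 0) at_top" by (rule tendsto_int_shift[OF r0])
  have r1': "((\<lambda>j. r (- j + 1)) \<longlongrightarrow> 0) at_top"
    using tendsto_int_shiftm[OF r0', of 1] by simp
  have PAD: "PA (\<lambda>j. 1 - q j * r j)" unfolding PA_def
  proof (intro conjI allI)
    show "1 - q j * r j \<noteq> 0" for j by (rule assms(3))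
    show "NS (\<lambda>j. 1 - q j * r j - 1)"
      by (rule NS_cong[OF NS_uminus[OF NS_mult_conv[OF NSq r0]]]) simp
    show "NS (\<lambda>j. 1 - q (- j) * r (- j) - 1)"
      by (rule NS_cong[OF NS_uminus[OF NS_mult_conv[OF NSq' r0']]]) simp
  qed
  have PAE: "PA (\<lambda>j. 1 + q j * r (j + 1))" unfolding PA_def
  proof (intro conjI allI)
    show "1 + q j * r (j + 1) \<noteq> 0" for j by (rule assms(4))
    show "NS (\<lambda>j. 1 + q j * r (j + 1) - 1)"
      by (rule NS_cong[OF NS_mult_conv[OF NSq r1]]) simp
    show "NS (\<lambda>j. 1 + q (- j) * r (- j + 1) - 1)"
      by (rule NS_cong[OF NS_mult_conv[OF NSq' r1']]) simp
  qed
  have Deq: "Dn q r = PP (\<lambda>j. 1 - q j * r j)" by (simp add: fun_eq_iff Dn_def PP_def)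
  have Eeq: "En q r = PP (\<lambda>j. 1 + q j * r (j + 1))" by (simp add: fun_eq_iff En_def PP_def)
  obtain LD where LD: "LD \<noteq> 0" "(Dn q r \<longlongrightarrow> LD) at_top"
      "(\<lambda>N::nat. \<Prod>j\<in>{- int N..int N}. 1 - q j * r j) \<longlonglongrightarrow> LD"
    using PP_lim[OF PAD] unfolding Deq by blast
  obtain LE where LE: "LE \<noteq> 0" "(En q r \<longlongrightarrow> LE) at_top"
      "(\<lambda>N::nat. \<Prod>j\<in>{- int N..int N}. 1 + q j * r (j + 1)) \<longlonglongrightarrow> LE"
    using PP_lim[OF PAE] unfolding Eeq by blast
  have Di: "Dinf q r = LD" unfolding Dinf_def using LD(3) by (rule limI)
  have Ei: "Einf q r = LE" unfolding Einf_def using LE(3) by (rule limI)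
  define D where "D = Dn q r"
  define E where "E = En q r"
  define DI where "DI = Dinf q r"
  define EI where "EI = Einf q r"
  define Tq where "Tq = tailsum q"
  define Tr where "Tr = tailsum r"
  have DInz: "DI \<noteq> 0" and EInz: "EI \<noteq> 0" unfolding DI_def EI_def Di Ei using LD LE by auto
  have Dnz: "D m \<noteq> 0" for m unfolding D_def Deq by (rule PP_nz[OF PAD])
  have Enz: "E m \<noteq> 0" for m unfolding E_def Eeq by (rule PP_nz[OF PAE])
  have Drec: "D m = (1 - q m * r m) * D (m - 1)" for m unfolding D_def Deq by (rule PP_rec'[OF PAD])
  have Erec: "E m = (1 + q m * r (m + 1)) * E (m - 1)" for m unfolding E_def Eeq by (rule PP_rec'[OF PAE])
  have DL: "(D \<longlongrightarrow> DI) at_top" unfolding D_def DI_def Di by (rule LD(2))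
  have EL: "(E \<longlongrightarrow> EI) at_top" unfolding E_def EI_def Ei by (rule LE(2))
  have DL1: "((\<lambda>m. D (m - 1)) \<longlongrightarrow> DI) at_top" by (rule tendsto_int_shiftm[OF DL])
  have EL1: "((\<lambda>m. E (m - 1)) \<longlongrightarrow> EI) at_top" by (rule tendsto_int_shiftm[OF EL])
  have DL2: "((\<lambda>m. D (m + 1)) \<longlongrightarrow> DI) at_top" by (rule tendsto_int_shift[OF DL])
  have Tqrec: "Tq m = q m + Tq (m + 1)" for m unfolding Tq_def by (rule tailsum_rec[OF NSq])
  have Trrec: "Tr m = r m + Tr (m + 1)" for m unfolding Tr_def by (rule tailsum_rec[OF NSr])
  have Tq0: "(Tq \<longlongrightarrow> 0) at_top" unfolding Tq_def by (rule tailsum_lim[OF NSq])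
  have Tr0: "(Tr \<longlongrightarrow> 0) at_top" unfolding Tr_def by (rule tailsum_lim[OF NSr])
  have Tr1: "((\<lambda>m. Tr (m + 1)) \<longlongrightarrow> 0) at_top" by (rule tendsto_int_shift[OF Tr0])
  have NSu: "NS (uu q r)"
  proof (rule NS_cong[OF NS_mult_conv[OF NSq]])
    show "((\<lambda>j. E (j - 1) / D j) \<longlongrightarrow> EI / DI) at_top" using EL1 DL DInz by (intro tendsto_divide)
    show "q j * (E (j - 1) / D j) = uu q r j" for j by (simp add: uu_def D_def E_def)
  qed
  have NSv: "NS (vv q r)"
  proof (rule NS_cong[OF NS_mult_conv[OF NS_diff[OF NS_add[OF NS_uminus[OF NSr] NS_shift1[OF NSr]]
            NS_mult_conv[OF NSq]]]])
    show "((\<lambda>j. r j * r (j + 1)) \<longlongrightarrow> 0 * 0) at_top" using r0 r1 by (intro tendsto_mult)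
    show "((\<lambda>j. D (j - 1) / E j) \<longlongrightarrow> DI / EI) at_top" using DL1 EL EInz by (intro tendsto_divide)
    show "(- r j + r (j + 1) - q j * (r j * r (j + 1))) * (D (j - 1) / E j) = vv q r j" for j
      by (simp add: vv_def D_def E_def mult.assoc)
  qed
  have NSp: "NS (pp q r)"
  proof (rule NS_cong[OF NS_mult_conv[OF NS_diff[OF NS_diff[OF NSq NS_shift1[OF NSq]]
            NS_mult_conv[OF NSq]]]])
    show "((\<lambda>j. q (j + 1) * r (j + 1)) \<longlongrightarrow> 0 * 0) at_top"
      using tendsto_int_shift[OF q0] r1 by (intro tendsto_mult)
    show "((\<lambda>j. E (j - 1) / D (j + 1)) \<longlongrightarrow> EI / DI) at_top" using EL1 DL2 DInz by (intro tendsto_divide)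
    show "(q j - q (j + 1) - q j * (q (j + 1) * r (j + 1))) * (E (j - 1) / D (j + 1)) = pp q r j" for j
      by (simp add: pp_def D_def E_def mult.assoc)
  qed
  have NSs: "NS (ss q r)"
  proof (rule NS_cong[OF NS_mult_conv[OF NS_shift1[OF NSr]]])
    show "((\<lambda>j. D j / E j) \<longlongrightarrow> DI / EI) at_top" using DL EL EInz by (intro tendsto_divide)
    show "r (j + 1) * (D j / E j) = ss q r j" for j by (simp add: ss_def D_def E_def)
  qed
  have uu': "uu q r m = q m * E (m - 1) / D m" for m by (simp add: uu_def D_def E_def)
  have vv': "vv q r m = (- r m + r (m+1) - q m * r m * r (m+1)) * D (m - 1) / E m" for m
    by (simp add: vv_def D_def E_def)
  have pp': "pp q r m = (q m - q (m+1) - q m * q (m+1) * r (m+1)) * E (m - 1) / D (m + 1)" for m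
    by (simp add: pp_def D_def E_def)
  have ss': "ss q r m = r (m+1) * D m / E m" for m by (simp add: ss_def D_def E_def)
  have J1: "jostbarQ q r 1 = (\<lambda>m. (1, Tr m))"
    unfolding jostbarQ_U
  proof (rule jostbarU_eq[OF NS_zero NSr])
    show "solU (\<lambda>_. 0) r 1 (\<lambda>m. (1, Tr m))" unfolding solU1 fst_conv snd_conv
    proof (intro allI conjI)
      fix m show "Tr m = r m * 1 + Tr (m + 1)" using Trrec[of m] by simp
    qed simp
    show "((\<lambda>m. fst (1::complex, Tr m)) \<longlongrightarrow> 1) at_top" by simp
    show "((\<lambda>m. snd (1::complex, Tr m)) \<longlongrightarrow> 0) at_top" using Tr0 by simp
  qed
  have J2: "jostQ q r 1 = (\<lambda>m. (0, 1))"
    unfolding jostQ_U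
    by (rule jostU_eq[OF NS_zero NSr]) (simp_all add: solU1)
  have J3: "jostbarU (uu q r) (vv q r) 1 = (\<lambda>m. (E (m - 1) / EI, - r m * D (m - 1) / EI))"
  proof (rule jostbarU_eq[OF NSu NSv])
    show "solU (uu q r) (vv q r) 1 (\<lambda>m. (E (m - 1) / EI, - r m * D (m - 1) / EI))"
      unfolding solU1
    proof (intro allI conjI)
      fix m
      show "fst (E (m - 1) / EI, - r m * D (m - 1) / EI) =
        fst (E (m + 1 - 1) / EI, - r (m + 1) * D (m + 1 - 1) / EI) +
        uu q r m * snd (E (m + 1 - 1) / EI, - r (m + 1) * D (m + 1 - 1) / EI)"
        using Dnz[of m] EInz by (simp add: uu' Erec[of m] field_simps)
      show "snd (E (m - 1) / EI, - r m * D (m - 1) / EI) =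
        vv q r m * fst (E (m + 1 - 1) / EI, - r (m + 1) * D (m + 1 - 1) / EI) +
        snd (E (m + 1 - 1) / EI, - r (m + 1) * D (m + 1 - 1) / EI)"
        using Enz[of m] EInz by (simp add: vv' Drec[of m] field_simps)
    qed
    show "((\<lambda>m. fst (E (m - 1) / EI, - r m * D (m - 1) / EI)) \<longlongrightarrow> 1) at_top"
      using tendsto_divide[OF EL1 tendsto_const[of EI] EInz] EInz by simp
    show "((\<lambda>m. snd (E (m - 1) / EI, - r m * D (m - 1) / EI)) \<longlongrightarrow> 0) at_top"
      using tendsto_divide[OF tendsto_mult[OF tendsto_minus[OF r0] DL1] tendsto_const[of EI] EInz] by simp
  qed
  have J4: "jostU (uu q r) (vv q r) 1 = (\<lambda>m. (E (m - 1) / DI * Tq m, D (m - 1) / DI * (1 - r m * Tq m)))"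
  proof (rule jostU_eq[OF NSu NSv])
    show "solU (uu q r) (vv q r) 1 (\<lambda>m. (E (m - 1) / DI * Tq m, D (m - 1) / DI * (1 - r m * Tq m)))"
      unfolding solU1
    proof (intro allI conjI)
      fix m
      show "fst (E (m - 1) / DI * Tq m, D (m - 1) / DI * (1 - r m * Tq m)) =
        fst (E (m + 1 - 1) / DI * Tq (m + 1), D (m + 1 - 1) / DI * (1 - r (m + 1) * Tq (m + 1))) +
        uu q r m * snd (E (m + 1 - 1) / DI * Tq (m + 1), D (m + 1 - 1) / DI * (1 - r (m + 1) * Tq (m + 1)))"
        using Dnz[of m] DInz by (simp add: uu' Erec[of m] Tqrec[of m] field_simps)
      show "snd (E (m - 1) / DI * Tq m, D (m - 1) / DI * (1 - r m * Tq m)) =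
        vv q r m * fst (E (m + 1 - 1) / DI * Tq (m + 1), D (m + 1 - 1) / DI * (1 - r (m + 1) * Tq (m + 1))) +
        snd (E (m + 1 - 1) / DI * Tq (m + 1), D (m + 1 - 1) / DI * (1 - r (m + 1) * Tq (m + 1)))"
        using Enz[of m] DInz by (simp add: vv' Drec[of m] Tqrec[of m] field_simps)
    qed
    show "((\<lambda>m. fst (E (m - 1) / DI * Tq m, D (m - 1) / DI * (1 - r m * Tq m))) \<longlongrightarrow> 0) at_top"
      using tendsto_mult[OF tendsto_divide[OF EL1 tendsto_const[of DI] DInz] Tq0] by simp
    show "((\<lambda>m. snd (E (m - 1) / DI * Tq m, D (m - 1) / DI * (1 - r m * Tq m))) \<longlongrightarrow> 1) at_top"
      using tendsto_mult[OF tendsto_divide[OF DL1 tendsto_const[of DI] DInz]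
          tendsto_diff[OF tendsto_const[of 1] tendsto_mult[OF r0 Tq0]]] DInz by simp
  qed
  have J5: "jostbarU (pp q r) (ss q r) 1 = (\<lambda>m. (E (m - 1) / EI * (1 + q m * Tr (m + 1)), D m / EI * Tr (m + 1)))"
  proof (rule jostbarU_eq[OF NSp NSs])
    show "solU (pp q r) (ss q r) 1 (\<lambda>m. (E (m - 1) / EI * (1 + q m * Tr (m + 1)), D m / EI * Tr (m + 1)))"
      unfolding solU1
    proof (intro allI conjI)
      fix m
      show "fst (E (m - 1) / EI * (1 + q m * Tr (m + 1)), D m / EI * Tr (m + 1)) =
        fst (E (m + 1 - 1) / EI * (1 + q (m + 1) * Tr (m + 1 + 1)), D (m + 1) / EI * Tr (m + 1 + 1)) +
        pp q r m * snd (E (m + 1 - 1) / EI * (1 + q (m + 1) * Tr (m + 1 + 1)), D (m + 1) / EI * Tr (m + 1 + 1))"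
        unfolding Trrec[of "m+1"] using Dnz[of "m+1"] EInz by (simp add: pp' Erec[of m] field_simps)
      show "snd (E (m - 1) / EI * (1 + q m * Tr (m + 1)), D m / EI * Tr (m + 1)) =
        ss q r m * fst (E (m + 1 - 1) / EI * (1 + q (m + 1) * Tr (m + 1 + 1)), D (m + 1) / EI * Tr (m + 1 + 1)) +
        snd (E (m + 1 - 1) / EI * (1 + q (m + 1) * Tr (m + 1 + 1)), D (m + 1) / EI * Tr (m + 1 + 1))"
        unfolding Trrec[of "m+1"] Drec[of "m+1"] using Enz[of m] EInz by (simp add: ss' field_simps)
    qed
    show "((\<lambda>m. fst (E (m - 1) / EI * (1 + q m * Tr (m + 1)), D m / EI * Tr (m + 1))) \<longlongrightarrow> 1) at_top"
      using tendsto_mult[OF tendsto_divide[OF EL1 tendsto_const[of EI] EInz]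
          tendsto_add[OF tendsto_const[of 1] tendsto_mult[OF q0 Tr1]]] EInz by simp
    show "((\<lambda>m. snd (E (m - 1) / EI * (1 + q m * Tr (m + 1)), D m / EI * Tr (m + 1))) \<longlongrightarrow> 0) at_top"
      using tendsto_mult[OF tendsto_divide[OF DL tendsto_const[of EI] EInz] Tr1] by simp
  qed
  have J6: "jostU (pp q r) (ss q r) 1 = (\<lambda>m. (q m * E (m - 1) / DI, D m / DI))"
  proof (rule jostU_eq[OF NSp NSs])
    show "solU (pp q r) (ss q r) 1 (\<lambda>m. (q m * E (m - 1) / DI, D m / DI))"
      unfolding solU1
    proof (intro allI conjI)
      fix m
      show "fst (q m * E (m - 1) / DI, D m / DI) =
        fst (q (m + 1) * E (m + 1 - 1) / DI, D (m + 1) / DI) +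
        pp q r m * snd (q (m + 1) * E (m + 1 - 1) / DI, D (m + 1) / DI)"
        using Dnz[of "m+1"] DInz by (simp add: pp' Erec[of m] field_simps)
      show "snd (q m * E (m - 1) / DI, D m / DI) =
        ss q r m * fst (q (m + 1) * E (m + 1 - 1) / DI, D (m + 1) / DI) +
        snd (q (m + 1) * E (m + 1 - 1) / DI, D (m + 1) / DI)"
        unfolding Drec[of "m+1"] using Enz[of m] DInz by (simp add: ss' field_simps)
    qed
    show "((\<lambda>m. fst (q m * E (m - 1) / DI, D m / DI)) \<longlongrightarrow> 0) at_top"
      using tendsto_divide[OF tendsto_mult[OF q0 EL1] tendsto_const[of DI] DInz] by simp
    show "((\<lambda>m. snd (q m * E (m - 1) / DI, D m / DI)) \<longlongrightarrow> 1) at_top"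
      using tendsto_divide[OF DL tendsto_const[of DI] DInz] DInz by simp
  qed
  show ?thesis
    unfolding J1 J2 J3 J4 J5 J6 D_def[symmetric] E_def[symmetric] DI_def[symmetric] EI_def[symmetric]
      Tq_def[symmetric] Tr_def[symmetric] by simp
qed


end
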